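(* Let $\{\mathcal{T}_n\}_{n\ge K}$ be a $K$-type CMRT with type probabilities $p_1,\dots,p_K$ and attachment probabilities $(q_{ij})$, and for $k\ge0$ let $N_k(n)$ be the number of vertices of out-degree $k$ in $\mathcal{T}_n$. Then for each fixed $k$, $N_k(n)/n\to c_k$ in probability as $n\to\infty$, where $$c_k=\sum_{i=1}^K\frac{p_i}{1+r_i}\left(\frac{r_i}{1+r_i}\right)^k,\qquad r_i=\frac{1}{p_i}\sum_{j=1}^K p_jq_{ji},$$ and when $p_i=0$ the $i$-th term of $c_k$ is interpreted as $0$.
   Context: $K$-type Community Modulated Recursive Tree (CMRT): fix $K\ge 2$, a probability vector $(p_1,\dots,p_K)$ with $p_1=\max_i p_i>0$, and numbers $q_{ij}\ge 0$ with $\sum_{j=1}^K q_{ij}=1$ for each $i$. $\mathcal{T}_K$ is a uniform random recursive tree on vertices $\{1,\dots,K\}$ (a tree chosen uniformly among trees on these labels rooted at $1$ in which labels increase along paths from $1$), whose vertices are assigned the types $1,\dots,K$ via a uniform random permutation, so there is exactly one vertex of each type (the root of that type). For $n>K$, $\mathcal{T}_n$ is obtained from $\mathcal{T}_{n-1}$ by adding vertex $n$: (1) vertex $n$ is assigned type $i$ with probability $p_i$; (2) given its type $i$, it chooses to connect to type $j$ with probability $q_{ij}$; (3) it connects by an edge to an existing vertex of type $j$ chosen uniformly at random. All random choices are independent. Edges are directed from parent (earlier vertex) to child; the out-degree of a vertex is its number of children. *)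

theory Defs
  imports "HOL-Probability.Probability" "HOL-Combinatorics.Permutations"
begin

text \<open>A state of the CMRT with n vertices (labelled 1..n) is a pair (typ, par):
  typ v is the type (in 1..K) of vertex v, par v is the parent of vertex v
  (par 1 = 0 for the root 1; both functions are 0 outside the vertex set).\<close>

type_synonym cmrt_state = "(nat \<Rightarrow> nat) \<times> (nat \<Rightarrow> nat)"

definition recursive_trees :: "nat \<Rightarrow> (nat \<Rightarrow> nat) set" where
  "recursive_trees K = {f. (\<forall>m\<in>{2..K}. f m \<in> {1..<m}) \<and> (\<forall>m. m \<notin> {2..K} \<longrightarrow> f m = 0)}"

definition cmrt_init :: "nat \<Rightarrow> cmrt_state pmf" where
  "cmrt_init K =
     do { \<sigma> \<leftarrow> pmf_of_set {\<sigma>. \<sigma> permutes {1..K}};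
          f \<leftarrow> pmf_of_set (recursive_trees K);
          return_pmf (\<lambda>v. if v \<in> {1..K} then \<sigma> v else 0, f) }"

definition vec_pmf :: "nat \<Rightarrow> (nat \<Rightarrow> real) \<Rightarrow> nat pmf" where
  "vec_pmf K w = embed_pmf (\<lambda>i. if i \<in> {1..K} then w i else 0)"

definition cmrt_step :: "(nat \<Rightarrow> real) \<Rightarrow> (nat \<Rightarrow> nat \<Rightarrow> real) \<Rightarrow> nat \<Rightarrow> nat \<Rightarrow> cmrt_state \<Rightarrow> cmrt_state pmf" where
  "cmrt_step p q K n s =
     do { i \<leftarrow> vec_pmf K p;
          j \<leftarrow> vec_pmf K (q i);
          v \<leftarrow> pmf_of_set {v \<in> {1..n}. fst s v = j};
          return_pmf ((fst s)(Suc n := i), (snd s)(Suc n := v)) }"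

text \<open>Law of T_n (meaningful for n \<ge> K; for n \<le> K it is the law of T_K).\<close>
fun cmrt :: "(nat \<Rightarrow> real) \<Rightarrow> (nat \<Rightarrow> nat \<Rightarrow> real) \<Rightarrow> nat \<Rightarrow> nat \<Rightarrow> cmrt_state pmf" where
  "cmrt p q K 0 = cmrt_init K"
| "cmrt p q K (Suc m) =
     (if Suc m \<le> K then cmrt_init K else bind_pmf (cmrt p q K m) (cmrt_step p q K m))"

definition out_degree :: "nat \<Rightarrow> cmrt_state \<Rightarrow> nat \<Rightarrow> nat" where
  "out_degree n s v = card {w \<in> {1..n}. snd s w = v}"

definition N_deg :: "nat \<Rightarrow> nat \<Rightarrow> cmrt_state \<Rightarrow> nat" where
  "N_deg k n s = card {v \<in> {1..n}. out_degree n s v = k}"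

definition cmrt_r :: "(nat \<Rightarrow> real) \<Rightarrow> (nat \<Rightarrow> nat \<Rightarrow> real) \<Rightarrow> nat \<Rightarrow> nat \<Rightarrow> real" where
  "cmrt_r p q K i = (\<Sum>j=1..K. p j * q j i) / p i"

definition cmrt_c :: "(nat \<Rightarrow> real) \<Rightarrow> (nat \<Rightarrow> nat \<Rightarrow> real) \<Rightarrow> nat \<Rightarrow> nat \<Rightarrow> real" where
  "cmrt_c p q K k = (\<Sum>i=1..K. if p i = 0 then 0 else
      p i / (1 + cmrt_r p q K i) * (cmrt_r p q K i / (1 + cmrt_r p q K i)) ^ k)"

end

theory Submission
  imports Defs
begin

lemma vec_pmf_pmf:
  assumes "\<forall>i\<in>{1..K}. w i \<ge> 0" "(\<Sum>i=1..K. w i) = 1"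
  shows "pmf (vec_pmf K w) x = (if x \<in> {1..K} then w x else 0)"
proof -
  have "(\<integral>\<^sup>+x. ennreal (if x \<in> {1..K} then w x else 0) \<partial>count_space UNIV)
        = (\<Sum>x\<in>{1..K}. ennreal (if x \<in> {1..K} then w x else 0))"
    by (rule nn_integral_count_space') auto
  also have "\<dots> = ennreal (\<Sum>x\<in>{1..K}. w x)"
    using assms(1) by (subst sum_ennreal[symmetric]) auto
  finally have "(\<integral>\<^sup>+x. ennreal (if x \<in> {1..K} then w x else 0) \<partial>count_space UNIV) = 1"
    using assms(2) by simp
  then show ?thesis unfolding vec_pmf_def
    by (subst pmf_embed_pmf) (use assms(1) in auto)
qed

lemma vec_pmf_set:
  assumes "\<forall>i\<in>{1..K}. w i \<ge> 0" "(\<Sum>i=1..K. w i) = 1"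
  shows "set_pmf (vec_pmf K w) \<subseteq> {1..K}"
  using vec_pmf_pmf[OF assms] by (auto simp: set_pmf_iff split: if_splits)

lemma vec_pmf_expect:
  fixes f :: "nat \<Rightarrow> real"
  assumes "\<forall>i\<in>{1..K}. w i \<ge> 0" "(\<Sum>i=1..K. w i) = 1"
  shows "measure_pmf.expectation (vec_pmf K w) f = (\<Sum>i=1..K. w i * f i)"
  by (subst integral_measure_pmf_real[of "{1..K}"])
     (use vec_pmf_set[OF assms] vec_pmf_pmf[OF assms] in \<open>auto simp: mult.commute\<close>)

lemma integrable_bounded_pmf:
  fixes f :: "'a \<Rightarrow> real"
  assumes "\<forall>x. \<bar>f x\<bar> \<le> B"
  shows "integrable (measure_pmf M) f"
  by (rule measure_pmf.integrable_const_bound[where B=B]) (use assms in auto)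

lemma integral_bind_pmf:
  fixes f :: "'b \<Rightarrow> real"
  assumes "\<forall>x. \<bar>f x\<bar> \<le> B"
  shows "measure_pmf.expectation (bind_pmf M N) f =
         measure_pmf.expectation M (\<lambda>x. measure_pmf.expectation (N x) f)"
  unfolding measure_pmf_bind
  by (rule integral_bind[where K="count_space UNIV" and B=B and B'=1])
     (use assms measurable_measure_pmf[of N] in \<open>auto intro: measure_pmf.finite_measure\<close>)

lemma expect_abs_bound:
  fixes f :: "'a \<Rightarrow> real"
  assumes "\<forall>x. \<bar>f x\<bar> \<le> B"
  shows "\<bar>measure_pmf.expectation M f\<bar> \<le> B"
proof -
  have i: "integrable (measure_pmf M) f" by (rule integrable_bounded_pmf[OF assms])
  have "measure_pmf.expectation M f \<le> B"
    by (rule measure_pmf.integral_le_const[OF i]) (use assms abs_le_iff in auto)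
  moreover have "measure_pmf.expectation M (\<lambda>x. - f x) \<le> B"
    by (rule measure_pmf.integral_le_const) (use assms integrable_minus[OF i] abs_le_iff in auto)
  ultimately show ?thesis by simp
qed

definition newst :: "nat \<Rightarrow> cmrt_state \<Rightarrow> nat \<Rightarrow> nat \<Rightarrow> cmrt_state" where
  "newst n s i v = ((fst s)(Suc n := i), (snd s)(Suc n := v))"

definition Vt :: "nat \<Rightarrow> nat \<Rightarrow> cmrt_state \<Rightarrow> nat set" where
  "Vt j n s = {v\<in>{1..n}. fst s v = j}"

definition valid :: "nat \<Rightarrow> nat \<Rightarrow> cmrt_state \<Rightarrow> bool" where
  "valid K n s \<longleftrightarrow> (\<forall>v\<in>{1..n}. fst s v \<in> {1..K}) \<and> (\<forall>j\<in>{1..K}. Vt j n s \<noteq> {})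
     \<and> (\<forall>w\<in>{1..n}. snd s w \<le> n)"

definition params :: "nat \<Rightarrow> (nat \<Rightarrow> real) \<Rightarrow> (nat \<Rightarrow> nat \<Rightarrow> real) \<Rightarrow> bool" where
  "params K p q \<longleftrightarrow> (\<forall>i\<in>{1..K}. p i \<ge> 0) \<and> (\<Sum>i=1..K. p i) = 1
     \<and> (\<forall>i\<in>{1..K}. \<forall>j\<in>{1..K}. q i j \<ge> 0) \<and> (\<forall>i\<in>{1..K}. (\<Sum>j=1..K. q i j) = 1)"

definition SE :: "(nat\<Rightarrow>real) \<Rightarrow> (nat\<Rightarrow>nat\<Rightarrow>real) \<Rightarrow> nat \<Rightarrow> nat \<Rightarrow> cmrt_state \<Rightarrow> (nat \<Rightarrow> nat \<Rightarrow> real) \<Rightarrow> real" where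
  "SE p q K n s f = (\<Sum>i=1..K. p i * (\<Sum>j=1..K. q i j * ((\<Sum>v\<in>Vt j n s. f i v) / card (Vt j n s))))"

lemma Vt_finite[simp]: "finite (Vt j n s)"
  unfolding Vt_def by auto

lemma step_expect:
  fixes f :: "cmrt_state \<Rightarrow> real"
  assumes P: "params K p q" and V: "valid K n s" and b: "\<forall>x. \<bar>f x\<bar> \<le> B"
  shows "measure_pmf.expectation (cmrt_step p q K n s) f = SE p q K n s (\<lambda>i v. f (newst n s i v))"
proof -
  have p1: "\<forall>i\<in>{1..K}. p i \<ge> 0" "(\<Sum>i=1..K. p i) = 1"
    and q1: "\<And>i. i \<in> {1..K} \<Longrightarrow> \<forall>j\<in>{1..K}. q i j \<ge> 0"
    and q2: "\<And>i. i \<in> {1..K} \<Longrightarrow> (\<Sum>j=1..K. q i j) = 1"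
    using P unfolding params_def by auto
  have inner: "measure_pmf.expectation (pmf_of_set (Vt j n s) \<bind> (\<lambda>v. return_pmf (newst n s i v))) f
      = (\<Sum>v\<in>Vt j n s. f (newst n s i v)) / card (Vt j n s)" if "j \<in> {1..K}" for i j
  proof -
    have ne: "Vt j n s \<noteq> {}" using V that unfolding valid_def by auto
    show ?thesis
      by (subst integral_bind_pmf[OF b]) (simp add: integral_pmf_of_set[OF ne Vt_finite])
  qed
  have mid: "measure_pmf.expectation (vec_pmf K (q i) \<bind> (\<lambda>j. pmf_of_set (Vt j n s) \<bind> (\<lambda>v. return_pmf (newst n s i v)))) f
     = (\<Sum>j=1..K. q i j * ((\<Sum>v\<in>Vt j n s. f (newst n s i v)) / card (Vt j n s)))" if "i \<in> {1..K}" for i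
  proof -
    have bb: "\<forall>x. \<bar>measure_pmf.expectation (pmf_of_set (Vt x n s) \<bind> (\<lambda>v. return_pmf (newst n s i v))) f\<bar> \<le> B"
      using expect_abs_bound[OF b] by blast
    show ?thesis
      by (subst integral_bind_pmf[OF b], subst vec_pmf_expect[OF q1[OF that] q2[OF that]])
         (simp add: inner)
  qed
  show ?thesis
    unfolding cmrt_step_def SE_def
    apply (subst integral_bind_pmf[OF b], subst vec_pmf_expect[OF p1])
    apply (rule sum.cong[OF refl])
    apply (subst mid[symmetric], simp)
    apply (simp add: newst_def Vt_def)
    done
qed

lemma recursive_trees_finite: "finite (recursive_trees K)"
proof -
  have "recursive_trees K \<subseteq> {f. \<forall>x. (x \<in> {2..K} \<longrightarrow> f x \<in> {0..K}) \<and> (x \<notin> {2..K} \<longrightarrow> f x = 0)}"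
  proof
    fix f assume "f \<in> recursive_trees K"
    then have h: "\<forall>m\<in>{2..K}. f m \<in> {1..<m}" "\<forall>m. m \<notin> {2..K} \<longrightarrow> f m = 0"
      unfolding recursive_trees_def by auto
    have "f x \<le> K" if "x \<in> {2..K}" for x using h(1) that by fastforce
    then show "f \<in> {f. \<forall>x. (x \<in> {2..K} \<longrightarrow> f x \<in> {0..K}) \<and> (x \<notin> {2..K} \<longrightarrow> f x = 0)}"
      using h(2) by auto
  qed
  moreover have "finite {f. \<forall>x. (x \<in> {2..K} \<longrightarrow> f x \<in> {0..K}) \<and> (x \<notin> {2..K} \<longrightarrow> f x = (0::nat))}"
    by (rule finite_set_of_finite_funs) auto
  ultimately show ?thesis by (rule finite_subset)
qed

lemma recursive_trees_ne: "recursive_trees K \<noteq> {}"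
proof -
  have "(\<lambda>m. if m \<in> {2..K} then 1 else 0) \<in> recursive_trees K"
    unfolding recursive_trees_def by auto
  then show ?thesis by blast
qed

lemma perms_finite: "finite {\<sigma>. \<sigma> permutes {1..(K::nat)}}"
  by (rule finite_permutations) simp

lemma perms_ne: "{\<sigma>. \<sigma> permutes {1..(K::nat)}} \<noteq> {}"
  using permutes_id by blast

lemma valid_init:
  assumes "s \<in> set_pmf (cmrt_init K)"
  shows "valid K K s"
proof -
  have ps: "set_pmf (pmf_of_set {\<sigma>. \<sigma> permutes {1..K}}) = {\<sigma>. \<sigma> permutes {1..K}}"
    by (rule set_pmf_of_set[OF perms_ne perms_finite])
  have rs: "set_pmf (pmf_of_set (recursive_trees K)) = recursive_trees K"
    by (rule set_pmf_of_set[OF recursive_trees_ne recursive_trees_finite])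
  have "s \<in> (\<Union>\<sigma>\<in>{\<sigma>. \<sigma> permutes {1..K}}. \<Union>f\<in>recursive_trees K. {(\<lambda>v. if v \<in> {1..K} then \<sigma> v else 0, f)})"
    using assms unfolding cmrt_init_def by (simp only: set_bind_pmf set_return_pmf ps rs)
  then obtain \<sigma> f where s: "\<sigma> permutes {1..K}" "f \<in> recursive_trees K"
    "s = (\<lambda>v. if v \<in> {1..K} then \<sigma> v else 0, f)"
    by blast
  have a: "\<forall>v\<in>{1..K}. fst s v \<in> {1..K}"
    using s(1,3) permutes_in_image by fastforce
  have b: "Vt j K s \<noteq> {}" if "j \<in> {1..K}" for j
  proof -
    have "inv \<sigma> j \<in> {1..K}" using permutes_in_image[OF permutes_inv[OF s(1)]] that by blast
    moreover have "\<sigma> (inv \<sigma> j) = j" using s(1) permutes_inverses(1) by fastforce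
    ultimately have "inv \<sigma> j \<in> Vt j K s" using s(3) unfolding Vt_def by auto
    then show ?thesis by blast
  qed
  have c: "\<forall>w\<in>{1..K}. snd s w \<le> K"
  proof
    fix w assume w: "w \<in> {1..K}"
    show "snd s w \<le> K"
    proof (cases "w \<in> {2..K}")
      case True then show ?thesis using s(2,3) unfolding recursive_trees_def by fastforce
    next
      case False then show ?thesis using s(2,3) unfolding recursive_trees_def by auto
    qed
  qed
  show ?thesis using a b c unfolding valid_def by blast
qed

lemma valid_step:
  assumes P: "params K p q" and V: "valid K n s" and s': "s' \<in> set_pmf (cmrt_step p q K n s)"
  shows "valid K (Suc n) s'"
proof -
  have p1: "\<forall>i\<in>{1..K}. p i \<ge> 0" "(\<Sum>i=1..K. p i) = 1"
    and q1: "\<And>i. i \<in> {1..K} \<Longrightarrow> \<forall>j\<in>{1..K}. q i j \<ge> 0"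
    and q2: "\<And>i. i \<in> {1..K} \<Longrightarrow> (\<Sum>j=1..K. q i j) = 1"
    using P unfolding params_def by auto
  have "s' \<in> (\<Union>i\<in>set_pmf (vec_pmf K p). \<Union>j\<in>set_pmf (vec_pmf K (q i)).
           \<Union>v\<in>set_pmf (pmf_of_set (Vt j n s)). {newst n s i v})"
    using s' unfolding cmrt_step_def newst_def Vt_def by (simp only: set_bind_pmf set_return_pmf)
  then obtain i where ij1: "i \<in> set_pmf (vec_pmf K p)" and h1:
     "s' \<in> (\<Union>j\<in>set_pmf (vec_pmf K (q i)). \<Union>v\<in>set_pmf (pmf_of_set (Vt j n s)). {newst n s i v})"
    by (rule UN_E)
  from h1 obtain j where ij2: "j \<in> set_pmf (vec_pmf K (q i))" and h2:
     "s' \<in> (\<Union>v\<in>set_pmf (pmf_of_set (Vt j n s)). {newst n s i v})"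
    by (rule UN_E)
  from h2 obtain v where v: "v \<in> set_pmf (pmf_of_set (Vt j n s))" and h3: "s' \<in> {newst n s i v}"
    by (rule UN_E)
  from h3 have s'e: "s' = newst n s i v" by simp
  note ij = ij1 ij2
  have i: "i \<in> {1..K}" using ij(1) vec_pmf_set[OF p1] by auto
  have j: "j \<in> {1..K}" using ij(2) vec_pmf_set[OF q1[OF i] q2[OF i]] by auto
  have ne: "Vt j n s \<noteq> {}" using V j unfolding valid_def by auto
  have vV: "v \<in> Vt j n s" using v set_pmf_of_set[OF ne Vt_finite] by auto
  then have vn: "v \<in> {1..n}" unfolding Vt_def by auto
  have a: "\<forall>w\<in>{1..Suc n}. fst s' w \<in> {1..K}"
    using V i unfolding valid_def s'e newst_def by (auto simp: le_Suc_eq)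
  have b: "Vt j' (Suc n) s' \<noteq> {}" if "j' \<in> {1..K}" for j'
  proof -
    have "Vt j' n s \<noteq> {}" using V that unfolding valid_def by blast
    moreover have "Vt j' n s \<subseteq> Vt j' (Suc n) s'" unfolding Vt_def s'e newst_def by auto
    ultimately show ?thesis by blast
  qed
  have c: "\<forall>w\<in>{1..Suc n}. snd s' w \<le> Suc n"
    using V vn unfolding valid_def s'e newst_def by (auto simp: le_Suc_eq)
  show ?thesis using a b c unfolding valid_def by blast
qed

lemma valid_cmrt:
  assumes P: "params K p q" and K: "K \<ge> 1" and n: "n \<ge> K" and s: "s \<in> set_pmf (cmrt p q K n)"
  shows "valid K n s"
  using n s
proof (induction n arbitrary: s rule: dec_induct)
  case base
  have "cmrt p q K K = cmrt_init K" using K by (cases K) auto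
  then show ?case using base valid_init by simp
next
  case (step m)
  have "cmrt p q K (Suc m) = bind_pmf (cmrt p q K m) (cmrt_step p q K m)" using step(1) by simp
  then obtain s0 where "s0 \<in> set_pmf (cmrt p q K m)" "s \<in> set_pmf (cmrt_step p q K m s0)"
    using step(4) by auto
  then show ?case using step(3) valid_step[OF P] by blast
qed

lemma params_D:
  assumes "params K p q"
  shows "\<forall>i\<in>{1..K}. p i \<ge> 0" "(\<Sum>i=1..K. p i) = 1"
    "\<And>i j. i \<in> {1..K} \<Longrightarrow> j \<in> {1..K} \<Longrightarrow> q i j \<ge> 0"
    "\<And>i. i \<in> {1..K} \<Longrightarrow> (\<Sum>j=1..K. q i j) = 1"
  using assms unfolding params_def by auto

lemma valid_card:
  assumes "valid K n s" "j \<in> {1..K}"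
  shows "card (Vt j n s) > 0"
  using assms unfolding valid_def by (auto simp: card_gt_0_iff)

lemma valid_ne:
  assumes "valid K n s" "j \<in> {1..K}"
  shows "Vt j n s \<noteq> {}"
  using assms unfolding valid_def by auto

lemma SE_add: "SE p q K n s (\<lambda>i v. f i v + g i v) = SE p q K n s f + SE p q K n s g"
  unfolding SE_def by (simp add: sum.distrib distrib_left add_divide_distrib)

lemma SE_cmult: "SE p q K n s (\<lambda>i v. c * f i v) = c * SE p q K n s f"
  unfolding SE_def by (simp add: sum_distrib_left sum_divide_distrib algebra_simps)

lemma SE_diff: "SE p q K n s (\<lambda>i v. f i v - g i v) = SE p q K n s f - SE p q K n s g"
  unfolding SE_def by (simp add: sum_subtractf right_diff_distrib diff_divide_distrib)

lemma SE_const: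
  assumes P: "params K p q" and V: "valid K n s"
  shows "SE p q K n s (\<lambda>i v. c) = c"
proof -
  have "SE p q K n s (\<lambda>i v. c) = (\<Sum>i=1..K. p i * (\<Sum>j=1..K. q i j * c))"
    unfolding SE_def
    by (intro sum.cong refl arg_cong2[where f="(*)"]) (use valid_ne[OF V] in auto)
  also have "\<dots> = (\<Sum>i=1..K. p i * c)"
  proof (intro sum.cong refl)
    fix i assume i: "i \<in> {1..K}"
    have "(\<Sum>j=1..K. q i j * c) = (\<Sum>j=1..K. q i j) * c" by (simp add: sum_distrib_right)
    then show "p i * (\<Sum>j=1..K. q i j * c) = p i * c" using params_D(4)[OF P i] by simp
  qed
  also have "\<dots> = c" using params_D(2)[OF P] by (simp add: sum_distrib_right[symmetric])
  finally show ?thesis .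
qed

lemma SE_mono:
  assumes P: "params K p q" and V: "valid K n s"
    and le: "\<And>i v. i \<in> {1..K} \<Longrightarrow> v \<in> {1..n} \<Longrightarrow> f i v \<le> g i v"
  shows "SE p q K n s f \<le> SE p q K n s g"
  unfolding SE_def
proof (intro sum_mono mult_left_mono)
  fix i j assume i: "i \<in> {1..K}" and j: "j \<in> {1..K}"
  have "(\<Sum>v\<in>Vt j n s. f i v) \<le> (\<Sum>v\<in>Vt j n s. g i v)"
    by (rule sum_mono) (use le i in \<open>auto simp: Vt_def\<close>)
  then show "(\<Sum>v\<in>Vt j n s. f i v) / real (card (Vt j n s)) \<le> (\<Sum>v\<in>Vt j n s. g i v) / real (card (Vt j n s))"
    by (simp add: divide_right_mono)
  show "0 \<le> q i j" using params_D(3)[OF P i j] .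
  show "0 \<le> p i" using params_D(1)[OF P] i by auto
qed

lemma SE_ind_i:
  assumes P: "params K p q" and V: "valid K n s" and j0: "j0 \<in> {1..K}"
  shows "SE p q K n s (\<lambda>i v. if i = j0 then c else 0) = c * p j0"
proof -
  have "SE p q K n s (\<lambda>i v. if i = j0 then c else 0) = (\<Sum>i=1..K. p i * (if i = j0 then c else 0))"
    unfolding SE_def
  proof (intro sum.cong refl arg_cong2[where f="(*)"])
    fix i assume i: "i \<in> {1..K}"
    have "(\<Sum>j=1..K. q i j * ((\<Sum>v\<in>Vt j n s. if i = j0 then c else 0) / card (Vt j n s)))
        = (\<Sum>j=1..K. q i j * (if i = j0 then c else 0))"
      by (intro sum.cong refl arg_cong2[where f="(*)"]) (use valid_ne[OF V] in auto)
    also have "\<dots> = (if i = j0 then c else 0)"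
    proof -
      have "(\<Sum>j=1..K. q i j * (if i = j0 then c else 0)) = (\<Sum>j=1..K. q i j) * (if i = j0 then c else 0)"
        by (simp add: sum_distrib_right)
      then show ?thesis using params_D(4)[OF P i] by simp
    qed
    finally show "(\<Sum>j=1..K. q i j * ((\<Sum>v\<in>Vt j n s. if i = j0 then c else 0) / card (Vt j n s)))
        = (if i = j0 then c else 0)" .
  qed
  also have "\<dots> = (\<Sum>i=1..K. if i = j0 then p j0 * c else 0)" by (rule sum.cong) auto
  also have "\<dots> = c * p j0" using j0 by simp
  finally show ?thesis .
qed

lemma SE_ind_v:
  assumes P: "params K p q" and V: "valid K n s" and j0: "j0 \<in> {1..K}"
  shows "SE p q K n s (\<lambda>i v. if fst s v = j0 \<and> Q v then 1 else 0)
       = (\<Sum>i=1..K. p i * q i j0) * card {v\<in>Vt j0 n s. Q v} / card (Vt j0 n s)"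
proof -
  have inner: "(\<Sum>j=1..K. q i j * ((\<Sum>v\<in>Vt j n s. if fst s v = j0 \<and> Q v then 1 else 0) / card (Vt j n s)))
     = q i j0 * (card {v\<in>Vt j0 n s. Q v} / card (Vt j0 n s))" for i
  proof -
    have "(\<Sum>v\<in>Vt j n s. if fst s v = j0 \<and> Q v then 1 else (0::real))
        = (if j = j0 then card {v\<in>Vt j0 n s. Q v} else 0)" for j
    proof (cases "j = j0")
      case True
      have "(\<Sum>v\<in>Vt j n s. if fst s v = j0 \<and> Q v then 1 else (0::real))
          = (\<Sum>v\<in>Vt j n s. if Q v then 1 else 0)"
        by (rule sum.cong) (use True in \<open>auto simp: Vt_def\<close>)
      also have "\<dots> = card {v\<in>Vt j0 n s. Q v}"
        using True by (simp add: sum.If_cases Int_def conj_commute)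
      finally show ?thesis using True by simp
    next
      case False
      have "(\<Sum>v\<in>Vt j n s. if fst s v = j0 \<and> Q v then 1 else (0::real)) = 0"
        by (rule sum.neutral) (use False in \<open>auto simp: Vt_def\<close>)
      then show ?thesis using False by simp
    qed
    then have "(\<Sum>j=1..K. q i j * ((\<Sum>v\<in>Vt j n s. if fst s v = j0 \<and> Q v then 1 else 0) / card (Vt j n s)))
      = (\<Sum>j=1..K. if j = j0 then q i j0 * (card {v\<in>Vt j0 n s. Q v} / card (Vt j0 n s)) else 0)"
      by (intro sum.cong refl) auto
    then show ?thesis using j0 by simp
  qed
  show ?thesis unfolding SE_def inner
    by (simp add: sum_divide_distrib sum_distrib_right algebra_simps)
qed

lemma SE_sq:
  assumes P: "params K p q" and V: "valid K n s"
    and B: "\<And>i v. i \<in> {1..K} \<Longrightarrow> v \<in> {1..n} \<Longrightarrow> \<bar>f i v - z\<bar> \<le> B"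
  shows "SE p q K n s (\<lambda>i v. (f i v)\<^sup>2) \<le> z\<^sup>2 + 2 * z * (SE p q K n s f - z) + B\<^sup>2"
proof -
  have e: "(\<lambda>i v. (f i v)\<^sup>2) = (\<lambda>i v. z\<^sup>2 + ((2 * z) * (f i v - z) + (f i v - z)\<^sup>2))"
    by (auto simp: power2_eq_square algebra_simps)
  have "SE p q K n s (\<lambda>i v. (f i v - z)\<^sup>2) \<le> SE p q K n s (\<lambda>i v. B\<^sup>2)"
  proof (rule SE_mono[OF P V])
    fix i v assume "i \<in> {1..K}" "v \<in> {1..n}"
    then have "\<bar>f i v - z\<bar> \<le> B" by (rule B)
    then show "(f i v - z)\<^sup>2 \<le> B\<^sup>2"
      by (metis abs_ge_zero abs_le_square_iff abs_of_nonneg order_trans)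
  qed
  then have "SE p q K n s (\<lambda>i v. (f i v - z)\<^sup>2) \<le> B\<^sup>2" using SE_const[OF P V] by simp
  moreover have "SE p q K n s (\<lambda>i v. f i v - z) = SE p q K n s f - z"
    using SE_diff[of p q K n s f "\<lambda>i v. z"] SE_const[OF P V] by simp
  ultimately show ?thesis
    unfolding e SE_add SE_cmult SE_const[OF P V] by simp
qed

definition Mc :: "nat \<Rightarrow> nat \<Rightarrow> cmrt_state \<Rightarrow> nat" where
  "Mc j n s = card (Vt j n s)"

definition Nc :: "nat \<Rightarrow> nat \<Rightarrow> nat \<Rightarrow> cmrt_state \<Rightarrow> nat" where
  "Nc k j n s = card {v\<in>Vt j n s. out_degree n s v = k}"

lemma card_split_point:
  assumes "finite A"
  shows "card {w\<in>A. P w} = card {w\<in>A. w \<noteq> v \<and> P w} + (if v \<in> A \<and> P v then 1 else 0)"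
proof (cases "v \<in> A \<and> P v")
  case True
  have "{w\<in>A. P w} = insert v {w\<in>A. w \<noteq> v \<and> P w}" using True by auto
  then show ?thesis using True assms by simp
next
  case False
  have "{w\<in>A. P w} = {w\<in>A. w \<noteq> v \<and> P w}" using False by auto
  then show ?thesis using False by simp
qed

lemma od_new_old:
  assumes V: "valid K n s" and v: "v \<in> {1..n}" and w: "w \<in> {1..n}"
  shows "out_degree (Suc n) (newst n s i v) w = out_degree n s w + (if w = v then 1 else 0)"
proof -
  have "{w'\<in>{1..Suc n}. snd (newst n s i v) w' = w}
      = {w'\<in>{1..n}. snd s w' = w} \<union> (if v = w then {Suc n} else {})"
    unfolding newst_def by (auto simp: le_Suc_eq)
  moreover have "Suc n \<notin> {w'\<in>{1..n}. snd s w' = w}" by auto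
  ultimately show ?thesis unfolding out_degree_def by auto
qed

lemma od_new_new:
  assumes V: "valid K n s" and v: "v \<in> {1..n}"
  shows "out_degree (Suc n) (newst n s i v) (Suc n) = 0"
proof -
  have "{w'\<in>{1..Suc n}. snd (newst n s i v) w' = Suc n} = {}"
    using V v unfolding newst_def valid_def by (force simp: le_Suc_eq)
  then show ?thesis unfolding out_degree_def by simp
qed

lemma Mc_new:
  assumes V: "valid K n s" and v: "v \<in> {1..n}"
  shows "real (Mc j (Suc n) (newst n s i v)) = real (Mc j n s) + (if i = j then 1 else 0)"
proof -
  have "Vt j (Suc n) (newst n s i v) = Vt j n s \<union> (if i = j then {Suc n} else {})"
    unfolding newst_def Vt_def by (auto simp: le_Suc_eq)
  moreover have "Suc n \<notin> Vt j n s" unfolding Vt_def by auto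
  ultimately show ?thesis unfolding Mc_def by auto
qed

lemma Nc_new:
  assumes V: "valid K n s" and v: "v \<in> {1..n}"
  shows "real (Nc k j (Suc n) (newst n s i v)) = real (Nc k j n s) + (if i = j \<and> k = 0 then 1 else 0)
     + (if fst s v = j \<and> out_degree n s v + 1 = k then 1 else 0)
     - (if fst s v = j \<and> out_degree n s v = k then 1 else 0)"
proof -
  let ?s' = "newst n s i v"
  have "{w\<in>Vt j (Suc n) ?s'. out_degree (Suc n) ?s' w = k}
      = {w\<in>Vt j n s. out_degree n s w + (if w = v then 1 else 0) = k}
        \<union> (if i = j \<and> k = 0 then {Suc n} else {})" (is "?L = ?A \<union> ?B")
  proof
    show "?L \<subseteq> ?A \<union> ?B"
    proof
      fix w assume w: "w \<in> ?L"
      show "w \<in> ?A \<union> ?B"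
      proof (cases "w = Suc n")
        case True
        then show ?thesis using w od_new_new[OF V v, of i] unfolding Vt_def newst_def by auto
      next
        case False
        then have wn: "w \<in> {1..n}" using w unfolding Vt_def by (auto simp: le_Suc_eq)
        then show ?thesis using w False od_new_old[OF V v wn, of i] unfolding Vt_def newst_def by auto
      qed
    qed
  next
    show "?A \<union> ?B \<subseteq> ?L"
    proof
      fix w assume w: "w \<in> ?A \<union> ?B"
      show "w \<in> ?L"
      proof (cases "w = Suc n")
        case True
        then show ?thesis using w od_new_new[OF V v, of i] unfolding Vt_def newst_def
          by (auto split: if_splits)
      next
        case False
        then have wn: "w \<in> {1..n}" using w unfolding Vt_def by (auto split: if_splits)
        then show ?thesis using w False od_new_old[OF V v wn, of i] unfolding Vt_def newst_def
          by (auto split: if_splits)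
      qed
    qed
  qed
  moreover have "Suc n \<notin> ?A" unfolding Vt_def by auto
  moreover have fA: "finite ?A" by simp
  ultimately have c1: "card ?L = card ?A + (if i = j \<and> k = 0 then 1 else 0)"
  proof (cases "i = j \<and> k = 0")
    case True
    then have "?L = insert (Suc n) ?A" using \<open>?L = ?A \<union> ?B\<close> by simp
    then show ?thesis using True card_insert_disjoint[OF fA \<open>Suc n \<notin> ?A\<close>] by simp
  next
    case False
    then have B0: "?B = {}" by auto
    have "?L = ?A" using \<open>?L = ?A \<union> ?B\<close> B0 by (simp only: Un_empty_right)
    then show ?thesis using False by simp
  qed
  have c2: "card ?A = card {w\<in>Vt j n s. w \<noteq> v \<and> out_degree n s w + (if w = v then 1 else 0) = k}
      + (if v \<in> Vt j n s \<and> out_degree n s v + 1 = k then 1 else 0)"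
    using card_split_point[OF Vt_finite[of j n s], where P="\<lambda>w. out_degree n s w + (if w = v then 1 else 0) = k" and v=v]
    by simp
  have c3: "card {w\<in>Vt j n s. out_degree n s w = k} = card {w\<in>Vt j n s. w \<noteq> v \<and> out_degree n s w = k}
      + (if v \<in> Vt j n s \<and> out_degree n s v = k then 1 else 0)"
    using card_split_point[OF Vt_finite[of j n s], where P="\<lambda>w. out_degree n s w = k" and v=v] by simp
  have c4: "{w\<in>Vt j n s. w \<noteq> v \<and> out_degree n s w + (if w = v then 1 else 0) = k}
       = {w\<in>Vt j n s. w \<noteq> v \<and> out_degree n s w = k}" by auto
  have vj: "v \<in> Vt j n s \<longleftrightarrow> fst s v = j" using v unfolding Vt_def by auto
  show ?thesis unfolding Nc_def using c1 c2 c3 c4 vj by (simp split: if_splits)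
qed

lemma cmrt_Suc:
  assumes "n \<ge> K"
  shows "cmrt p q K (Suc n) = bind_pmf (cmrt p q K n) (cmrt_step p q K n)"
  using assms by simp

lemma sq_bound:
  fixes x C :: real
  assumes "\<bar>x\<bar> \<le> C"
  shows "\<bar>x\<^sup>2\<bar> \<le> C\<^sup>2"
proof -
  have "\<bar>x\<bar>\<^sup>2 \<le> C\<^sup>2" by (rule power_mono[OF assms]) simp
  then show ?thesis by simp
qed

lemma rec_step:
  fixes Z :: "nat \<Rightarrow> cmrt_state \<Rightarrow> real" and h :: "cmrt_state \<Rightarrow> real"
  assumes P: "params K p q" and K: "K \<ge> 1" and n: "n \<ge> K"
    and bZ0: "\<forall>s. \<bar>Z n s\<bar> \<le> C0" and bZ1: "\<forall>s. \<bar>Z (Suc n) s\<bar> \<le> C1"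
    and bh: "\<forall>s. \<bar>h s\<bar> \<le> C2"
    and delta: "\<And>s i v. valid K n s \<Longrightarrow> i \<in> {1..K} \<Longrightarrow> v \<in> {1..n} \<Longrightarrow>
                  \<bar>Z (Suc n) (newst n s i v) - Z n s\<bar> \<le> B"
    and drift: "\<And>s. valid K n s \<Longrightarrow>
                  Z n s * (SE p q K n s (\<lambda>i v. Z (Suc n) (newst n s i v)) - Z n s) \<le> h s"
  shows "measure_pmf.expectation (cmrt p q K (Suc n)) (\<lambda>s. (Z (Suc n) s)\<^sup>2)
     \<le> measure_pmf.expectation (cmrt p q K n) (\<lambda>s. (Z n s)\<^sup>2)
        + 2 * measure_pmf.expectation (cmrt p q K n) h + B\<^sup>2"
proof -
  have b1: "\<forall>s. \<bar>(Z (Suc n) s)\<^sup>2\<bar> \<le> C1\<^sup>2"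
    using bZ1 sq_bound by blast
  have b0: "\<forall>s. \<bar>(Z n s)\<^sup>2\<bar> \<le> C0\<^sup>2"
    using bZ0 sq_bound by blast
  have "measure_pmf.expectation (cmrt p q K (Suc n)) (\<lambda>s. (Z (Suc n) s)\<^sup>2)
      = measure_pmf.expectation (cmrt p q K n)
          (\<lambda>s. measure_pmf.expectation (cmrt_step p q K n s) (\<lambda>s. (Z (Suc n) s)\<^sup>2))"
    unfolding cmrt_Suc[OF n] by (rule integral_bind_pmf[OF b1])
  also have "\<dots> \<le> measure_pmf.expectation (cmrt p q K n) (\<lambda>s. (Z n s)\<^sup>2 + 2 * h s + B\<^sup>2)"
  proof (rule integral_mono_AE)
    show "integrable (measure_pmf (cmrt p q K n))
        (\<lambda>s. measure_pmf.expectation (cmrt_step p q K n s) (\<lambda>s. (Z (Suc n) s)\<^sup>2))"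
      by (rule integrable_bounded_pmf[where B="C1\<^sup>2"]) (use expect_abs_bound[OF b1] in blast)
    have "\<forall>s. \<bar>(Z n s)\<^sup>2 + 2 * h s + B\<^sup>2\<bar> \<le> C0\<^sup>2 + 2 * C2 + B\<^sup>2"
    proof
      fix s
      have u: "\<bar>(Z n s)\<^sup>2\<bar> \<le> C0\<^sup>2" "\<bar>h s\<bar> \<le> C2" "0 \<le> B\<^sup>2"
        using spec[OF b0, of s] spec[OF bh, of s] by auto
      then show "\<bar>(Z n s)\<^sup>2 + 2 * h s + B\<^sup>2\<bar> \<le> C0\<^sup>2 + 2 * C2 + B\<^sup>2"
        unfolding abs_le_iff by linarith
    qed
    then show "integrable (measure_pmf (cmrt p q K n)) (\<lambda>s. (Z n s)\<^sup>2 + 2 * h s + B\<^sup>2)"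
      by (rule integrable_bounded_pmf)
    show "AE s in measure_pmf (cmrt p q K n).
       measure_pmf.expectation (cmrt_step p q K n s) (\<lambda>s. (Z (Suc n) s)\<^sup>2) \<le> (Z n s)\<^sup>2 + 2 * h s + B\<^sup>2"
    proof (rule AE_pmfI)
      fix s assume "s \<in> set_pmf (cmrt p q K n)"
      then have V: "valid K n s" by (rule valid_cmrt[OF P K n])
      have "measure_pmf.expectation (cmrt_step p q K n s) (\<lambda>s. (Z (Suc n) s)\<^sup>2)
          = SE p q K n s (\<lambda>i v. (Z (Suc n) (newst n s i v))\<^sup>2)"
        by (rule step_expect[OF P V b1])
      also have "\<dots> \<le> (Z n s)\<^sup>2 + 2 * Z n s * (SE p q K n s (\<lambda>i v. Z (Suc n) (newst n s i v)) - Z n s) + B\<^sup>2"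
        by (rule SE_sq[OF P V]) (rule delta[OF V])
      also have "\<dots> \<le> (Z n s)\<^sup>2 + 2 * h s + B\<^sup>2"
        using drift[OF V] by simp
      finally show "measure_pmf.expectation (cmrt_step p q K n s) (\<lambda>s. (Z (Suc n) s)\<^sup>2) \<le> (Z n s)\<^sup>2 + 2 * h s + B\<^sup>2" .
    qed
  qed
  also have "\<dots> = measure_pmf.expectation (cmrt p q K n) (\<lambda>s. (Z n s)\<^sup>2)
        + 2 * measure_pmf.expectation (cmrt p q K n) h + B\<^sup>2"
  proof -
    have i0: "integrable (measure_pmf (cmrt p q K n)) (\<lambda>s. (Z n s)\<^sup>2)" by (rule integrable_bounded_pmf[OF b0])
    have ih: "integrable (measure_pmf (cmrt p q K n)) h" by (rule integrable_bounded_pmf[OF bh])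
    have "measure_pmf.expectation (cmrt p q K n) (\<lambda>s. (Z n s)\<^sup>2 + 2 * h s + B\<^sup>2)
       = measure_pmf.expectation (cmrt p q K n) (\<lambda>s. (Z n s)\<^sup>2 + 2 * h s) + measure_pmf.expectation (cmrt p q K n) (\<lambda>s. B\<^sup>2)"
      by (rule Bochner_Integration.integral_add) (use i0 ih in auto)
    also have "measure_pmf.expectation (cmrt p q K n) (\<lambda>s. (Z n s)\<^sup>2 + 2 * h s)
       = measure_pmf.expectation (cmrt p q K n) (\<lambda>s. (Z n s)\<^sup>2) + measure_pmf.expectation (cmrt p q K n) (\<lambda>s. 2 * h s)"
      by (rule Bochner_Integration.integral_add) (use i0 ih in auto)
    also have "measure_pmf.expectation (cmrt p q K n) (\<lambda>s. 2 * h s) = 2 * measure_pmf.expectation (cmrt p q K n) h"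
      by (rule Bochner_Integration.integral_mult_right_zero)
    also have "measure_pmf.expectation (cmrt p q K n) (\<lambda>s. B\<^sup>2) = B\<^sup>2" by simp
    finally show ?thesis .
  qed
  finally show ?thesis .
qed

lemma osum_aux:
  fixes D e :: "nat \<Rightarrow> real"
  assumes rec: "\<And>n. n \<ge> N \<Longrightarrow> D (Suc n) \<le> D n + e n"
    and eb: "\<And>n. n \<ge> N \<Longrightarrow> e n \<le> \<epsilon> * real n" and eps: "\<epsilon> \<ge> 0"
    and n: "n \<ge> N"
  shows "D n \<le> D N + \<epsilon> * (real n)\<^sup>2"
  using n
proof (induction n rule: dec_induct)
  case base
  then show ?case using eps by simp
next
  case (step m)
  have "D (Suc m) \<le> D m + e m" using rec step(1) .
  also have "\<dots> \<le> D N + \<epsilon> * (real m)\<^sup>2 + \<epsilon> * real m" using step(3) eb[OF step(1)] by simp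
  also have "\<dots> \<le> D N + \<epsilon> * (real (Suc m))\<^sup>2"
  proof -
    have "(real m)\<^sup>2 + real m \<le> (real (Suc m))\<^sup>2" by (simp add: power2_eq_square algebra_simps)
    then have "\<epsilon> * ((real m)\<^sup>2 + real m) \<le> \<epsilon> * (real (Suc m))\<^sup>2" by (rule mult_left_mono[OF _ eps])
    then show ?thesis by (simp add: algebra_simps)
  qed
  finally show ?case .
qed

lemma osum:
  fixes D e :: "nat \<Rightarrow> real"
  assumes rec: "\<And>n. n \<ge> N \<Longrightarrow> D (Suc n) \<le> D n + e n"
    and e: "(\<lambda>n. e n / real n) \<longlonglongrightarrow> 0" and D0: "\<And>n. D n \<ge> 0"
  shows "(\<lambda>n. D n / (real n)\<^sup>2) \<longlonglongrightarrow> 0"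
proof (rule LIMSEQ_I)
  fix r :: real assume r: "r > 0"
  obtain N1 where N1: "\<And>n. n \<ge> N1 \<Longrightarrow> norm (e n / real n - 0) < r / 4"
    using LIMSEQ_D[OF e, of "r/4"] r by auto
  define N2 where "N2 = max N (max N1 1)"
  have eb: "e n \<le> r / 4 * real n" if "n \<ge> N2" for n
  proof -
    have "n \<ge> N1" "n \<ge> 1" using that unfolding N2_def by auto
    then have "\<bar>e n / real n\<bar> < r / 4" using N1 by simp
    then have "e n / real n < r / 4" by (rule le_less_trans[OF abs_ge_self])
    then show ?thesis using \<open>n \<ge> 1\<close> by (simp add: divide_less_eq)
  qed
  have rec2: "\<And>n. n \<ge> N2 \<Longrightarrow> D (Suc n) \<le> D n + e n" using rec unfolding N2_def by auto
  obtain N3 :: nat where N3: "real N3 > 4 * D N2 / r" using reals_Archimedean2 by blast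
  show "\<exists>no. \<forall>n\<ge>no. norm (D n / (real n)\<^sup>2 - 0) < r"
  proof (intro exI allI impI)
    fix n assume n: "n \<ge> max N2 (max N3 1)"
    then have nN2: "n \<ge> N2" and n1: "n \<ge> 1" and n3: "n \<ge> N3" by auto
    have Dn: "D n \<le> D N2 + r / 4 * (real n)\<^sup>2"
      by (rule osum_aux[OF rec2 eb _ nN2]) (use r in auto)
    have pos: "(real n)\<^sup>2 > 0" using n1 by simp
    have "D N2 \<le> r / 4 * real n"
    proof -
      have "4 * D N2 / r < real n" using N3 n3 by linarith
      then show ?thesis using r by (simp add: field_simps)
    qed
    also have "\<dots> \<le> r / 4 * (real n)\<^sup>2"
      using n1 r by (intro mult_left_mono) (auto simp: power2_eq_square)
    finally have "D n \<le> r / 2 * (real n)\<^sup>2" using Dn by simp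
    also have "\<dots> < r * (real n)\<^sup>2" using pos r by simp
    finally have "D n / (real n)\<^sup>2 < r" using pos by (simp add: divide_less_eq)
    moreover have "D n / (real n)\<^sup>2 \<ge> 0" using D0 pos by simp
    ultimately show "norm (D n / (real n)\<^sup>2 - 0) < r" by simp
  qed
qed

lemma amgm_abs:
  fixes z c :: real
  assumes "c > 0"
  shows "\<bar>z\<bar> \<le> c + z\<^sup>2 / c"
proof -
  have "c * \<bar>z\<bar> \<le> c * c + \<bar>z\<bar> * \<bar>z\<bar>"
  proof (cases "\<bar>z\<bar> \<le> c")
    case True
    then have "c * \<bar>z\<bar> \<le> c * c" using assms by (intro mult_left_mono) auto
    then show ?thesis by (smt (verit) zero_le_square abs_mult_self_eq)
  next
    case False
    then have "c * \<bar>z\<bar> \<le> \<bar>z\<bar> * \<bar>z\<bar>" by (intro mult_right_mono) auto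
    then show ?thesis using assms by (smt (verit) mult_pos_pos)
  qed
  then have "c * \<bar>z\<bar> \<le> c * c + z\<^sup>2" by (simp add: power2_eq_square)
  then show ?thesis using assms by (simp add: field_simps)
qed

lemma L2_L1:
  fixes A D :: "nat \<Rightarrow> real"
  assumes D: "(\<lambda>n. D n / (real n)\<^sup>2) \<longlonglongrightarrow> 0"
    and A: "\<And>\<delta> n. \<delta> > 0 \<Longrightarrow> n \<ge> 1 \<Longrightarrow> A n \<le> \<delta> * real n + D n / (\<delta> * real n)"
    and A0: "\<And>n. A n \<ge> 0"
  shows "(\<lambda>n. A n / real n) \<longlonglongrightarrow> 0"
proof (rule LIMSEQ_I)
  fix r :: real assume r: "r > 0"
  obtain N where N: "\<And>n. n \<ge> N \<Longrightarrow> norm (D n / (real n)\<^sup>2 - 0) < r * r / 9"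
    using LIMSEQ_D[OF D, of "r * r / 9"] r by auto
  show "\<exists>no. \<forall>n\<ge>no. norm (A n / real n - 0) < r"
  proof (intro exI allI impI)
    fix n assume n: "n \<ge> max N 1"
    then have n1: "n \<ge> 1" and nN: "n \<ge> N" by auto
    have np: "real n > 0" using n1 by simp
    have DD: "D n / (real n)\<^sup>2 < r * r / 9"
      using N[OF nN] by (metis abs_ge_self le_less_trans real_norm_def diff_zero)
    have "A n \<le> r / 3 * real n + D n / (r / 3 * real n)" using A[of "r/3" n] r n1 by simp
    then have "A n / real n \<le> r / 3 + D n / (r / 3 * real n) / real n"
      using np by (simp add: divide_le_eq add_divide_distrib algebra_simps)
    also have "D n / (r / 3 * real n) / real n = (3 / r) * (D n / (real n)\<^sup>2)"
      using np r by (simp add: field_simps power2_eq_square)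
    also have "(3 / r) * (D n / (real n)\<^sup>2) < (3 / r) * (r * r / 9)"
      using DD r by (intro mult_strict_left_mono) auto
    also have "(3 / r) * (r * r / 9) = r / 3" using r by (simp add: field_simps)
    finally have "A n / real n < r" using r by linarith
    moreover have "A n / real n \<ge> 0" using A0 np by simp
    ultimately show "norm (A n / real n - 0) < r" by simp
  qed
qed

lemma Z_L1:
  fixes Z h :: "nat \<Rightarrow> cmrt_state \<Rightarrow> real"
  assumes P: "params K p q" and K: "K \<ge> 1"
    and bZ: "\<And>n. \<exists>C. \<forall>s. \<bar>Z n s\<bar> \<le> C"
    and bh: "\<And>n. \<exists>C. \<forall>s. \<bar>h n s\<bar> \<le> C"
    and delta: "\<And>n s i v. n \<ge> K \<Longrightarrow> valid K n s \<Longrightarrow> i \<in> {1..K} \<Longrightarrow> v \<in> {1..n} \<Longrightarrow>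
                  \<bar>Z (Suc n) (newst n s i v) - Z n s\<bar> \<le> B"
    and drift: "\<And>n s. n \<ge> K \<Longrightarrow> valid K n s \<Longrightarrow>
                  Z n s * (SE p q K n s (\<lambda>i v. Z (Suc n) (newst n s i v)) - Z n s) \<le> h n s"
    and hlim: "(\<lambda>n. measure_pmf.expectation (cmrt p q K n) (h n) / real n) \<longlonglongrightarrow> 0"
  shows "(\<lambda>n. measure_pmf.expectation (cmrt p q K n) (\<lambda>s. \<bar>Z n s\<bar>) / real n) \<longlonglongrightarrow> 0"
proof -
  define D where "D n = measure_pmf.expectation (cmrt p q K n) (\<lambda>s. (Z n s)\<^sup>2)" for n
  define e where "e n = 2 * measure_pmf.expectation (cmrt p q K n) (h n) + B\<^sup>2" for n
  have rec: "D (Suc n) \<le> D n + e n" if n: "n \<ge> K" for n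
  proof -
    obtain C0 where C0: "\<forall>s. \<bar>Z n s\<bar> \<le> C0" using bZ by blast
    obtain C1 where C1: "\<forall>s. \<bar>Z (Suc n) s\<bar> \<le> C1" using bZ by blast
    obtain C2 where C2: "\<forall>s. \<bar>h n s\<bar> \<le> C2" using bh by blast
    have "D (Suc n) \<le> D n + 2 * measure_pmf.expectation (cmrt p q K n) (h n) + B\<^sup>2"
      unfolding D_def
      by (rule rec_step[OF P K n C0 C1 C2]) (auto intro: delta[OF n] drift[OF n])
    then show ?thesis unfolding e_def by simp
  qed
  have elim: "(\<lambda>n. e n / real n) \<longlonglongrightarrow> 0"
  proof -
    have "(\<lambda>n. 2 * (measure_pmf.expectation (cmrt p q K n) (h n) / real n) + B\<^sup>2 / real n) \<longlonglongrightarrow> 2 * 0 + 0"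
      by (intro tendsto_add tendsto_mult tendsto_const hlim lim_const_over_n)
    then show ?thesis unfolding e_def by (simp add: add_divide_distrib)
  qed
  have D0: "D n \<ge> 0" for n unfolding D_def by simp
  have Dlim: "(\<lambda>n. D n / (real n)\<^sup>2) \<longlonglongrightarrow> 0" by (rule osum[OF rec elim D0])
  show ?thesis
  proof (rule L2_L1[OF Dlim])
    fix \<delta> :: real and n :: nat assume d: "\<delta> > 0" and n1: "n \<ge> 1"
    have c: "\<delta> * real n > 0" using d n1 by simp
    obtain C0 where C0: "\<forall>s. \<bar>Z n s\<bar> \<le> C0" using bZ by blast
    have b2: "\<forall>s. \<bar>(Z n s)\<^sup>2\<bar> \<le> C0\<^sup>2" using C0 sq_bound by blast
    have i1: "integrable (measure_pmf (cmrt p q K n)) (\<lambda>s. \<bar>Z n s\<bar>)"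
      by (rule integrable_bounded_pmf[where B=C0]) (use C0 in auto)
    have i2: "integrable (measure_pmf (cmrt p q K n)) (\<lambda>s. (Z n s)\<^sup>2)"
      by (rule integrable_bounded_pmf[OF b2])
    have "measure_pmf.expectation (cmrt p q K n) (\<lambda>s. \<bar>Z n s\<bar>)
        \<le> measure_pmf.expectation (cmrt p q K n) (\<lambda>s. \<delta> * real n + (Z n s)\<^sup>2 / (\<delta> * real n))"
      by (rule integral_mono) (use i1 i2 amgm_abs[OF c] in auto)
    also have "\<dots> = \<delta> * real n + D n / (\<delta> * real n)"
      unfolding D_def using i2 by simp
    finally show "measure_pmf.expectation (cmrt p q K n) (\<lambda>s. \<bar>Z n s\<bar>) \<le> \<delta> * real n + D n / (\<delta> * real n)" .
  next
    fix n show "measure_pmf.expectation (cmrt p q K n) (\<lambda>s. \<bar>Z n s\<bar>) \<ge> 0" by simp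
  qed
qed

lemma SE_cong:
  assumes "\<And>i v. i \<in> {1..K} \<Longrightarrow> v \<in> {1..n} \<Longrightarrow> f i v = g i v"
  shows "SE p q K n s f = SE p q K n s g"
  unfolding SE_def
  by (intro sum.cong refl arg_cong2[where f="(*)"] arg_cong2[where f="(/)"])
     (use assms in \<open>auto simp: Vt_def\<close>)

lemma Vt_card_le: "card (Vt j n s) \<le> n"
proof -
  have "card (Vt j n s) \<le> card {1..n}" by (rule card_mono) (auto simp: Vt_def)
  then show ?thesis by simp
qed

lemma Nc_le_Mc: "Nc k j n s \<le> Mc j n s"
  unfolding Nc_def Mc_def by (rule card_mono) auto

lemma p_le_1:
  assumes P: "params K p q" and j: "j \<in> {1..K}"
  shows "p j \<le> 1"
proof -
  have "p j \<le> (\<Sum>i=1..K. p i)"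
    by (rule member_le_sum) (use params_D(1)[OF P] j in auto)
  then show ?thesis using params_D(2)[OF P] by simp
qed

lemma Y_L1:
  assumes P: "params K p q" and K: "K \<ge> 1" and j: "j \<in> {1..K}"
  shows "(\<lambda>n. measure_pmf.expectation (cmrt p q K n) (\<lambda>s. \<bar>real (Mc j n s) - p j * real n\<bar>) / real n) \<longlonglongrightarrow> 0"
proof -
  have pj: "0 \<le> p j" "p j \<le> 1" using params_D(1)[OF P] j p_le_1[OF P j] by auto
  show ?thesis
  proof (rule Z_L1[OF P K, where h="\<lambda>n s. 0" and B=1])
    fix n
    show "\<exists>C. \<forall>s. \<bar>real (Mc j n s) - p j * real n\<bar> \<le> C"
    proof (intro exI allI)
      fix s
      have "real (Mc j n s) \<le> real n" using Vt_card_le[of j n s] unfolding Mc_def by simp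
      moreover have "p j * real n \<le> real n" using pj by (simp add: mult_left_le_one_le)
      moreover have "0 \<le> p j * real n" using pj by simp
      ultimately show "\<bar>real (Mc j n s) - p j * real n\<bar> \<le> 2 * real n" by linarith
    qed
  next
    fix n show "\<exists>C. \<forall>s. \<bar>(0::real)\<bar> \<le> C" by auto
  next
    fix n s i v assume n: "n \<ge> K" and V: "valid K n s" and i: "i \<in> {1..K}" and v: "v \<in> {1..n}"
    show "\<bar>real (Mc j (Suc n) (newst n s i v)) - p j * real (Suc n) - (real (Mc j n s) - p j * real n)\<bar> \<le> 1"
      using Mc_new[OF V v, of j i] pj by (auto simp: algebra_simps)
  next
    fix n s assume n: "n \<ge> K" and V: "valid K n s"
    let ?z = "real (Mc j n s) - p j * real n"
    have "SE p q K n s (\<lambda>i v. real (Mc j (Suc n) (newst n s i v)) - p j * real (Suc n))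
        = SE p q K n s (\<lambda>i v. ?z + ((if i = j then 1 else 0) - p j))"
      by (rule SE_cong) (use Mc_new[OF V] in \<open>auto simp: algebra_simps\<close>)
    also have "\<dots> = ?z + (1 * p j - p j)"
      unfolding SE_add SE_diff SE_const[OF P V] SE_ind_i[OF P V j] by simp
    finally show "?z * (SE p q K n s (\<lambda>i v. real (Mc j (Suc n) (newst n s i v)) - p j * real (Suc n)) - ?z) \<le> 0"
      by simp
  next
    show "(\<lambda>n. measure_pmf.expectation (cmrt p q K n) (\<lambda>s. 0) / real n) \<longlonglongrightarrow> 0" by simp
  qed
qed

definition aa :: "(nat \<Rightarrow> real) \<Rightarrow> (nat \<Rightarrow> nat \<Rightarrow> real) \<Rightarrow> nat \<Rightarrow> nat \<Rightarrow> real" where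
  "aa p q K j = (\<Sum>i=1..K. p i * q i j)"

definition gam :: "(nat \<Rightarrow> real) \<Rightarrow> (nat \<Rightarrow> nat \<Rightarrow> real) \<Rightarrow> nat \<Rightarrow> nat \<Rightarrow> nat \<Rightarrow> real" where
  "gam p q K j k = 1 / (1 + cmrt_r p q K j) * (cmrt_r p q K j / (1 + cmrt_r p q K j)) ^ k"

definition Zk :: "(nat \<Rightarrow> real) \<Rightarrow> (nat \<Rightarrow> nat \<Rightarrow> real) \<Rightarrow> nat \<Rightarrow> nat \<Rightarrow> nat \<Rightarrow> nat \<Rightarrow> cmrt_state \<Rightarrow> real" where
  "Zk p q K j k n s = real (Nc k j n s) - gam p q K j k * real (Mc j n s)"

lemma aa_nonneg:
  assumes P: "params K p q" and j: "j \<in> {1..K}"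
  shows "aa p q K j \<ge> 0"
  unfolding aa_def using params_D(1,3)[OF P] j by (auto intro!: sum_nonneg)

lemma r_nonneg:
  assumes P: "params K p q" and j: "j \<in> {1..K}"
  shows "cmrt_r p q K j \<ge> 0"
  unfolding cmrt_r_def using aa_nonneg[OF P j] params_D(1)[OF P] j unfolding aa_def by auto

lemma gam_nonneg:
  assumes P: "params K p q" and j: "j \<in> {1..K}"
  shows "gam p q K j k \<ge> 0"
  unfolding gam_def using r_nonneg[OF P j] by auto

lemma gam_identity:
  assumes P: "params K p q" and j: "j \<in> {1..K}" and pj: "p j > 0"
  shows "((if k = 0 then 1 else 0) - gam p q K j k) * p j
       = aa p q K j * (gam p q K j k - (if k = 0 then 0 else gam p q K j (k - 1)))"
proof -
  define r where "r = cmrt_r p q K j"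
  have r0: "r \<ge> 0" unfolding r_def by (rule r_nonneg[OF P j])
  have a: "aa p q K j = r * p j" unfolding r_def cmrt_r_def aa_def using pj by simp
  show ?thesis
  proof (cases k)
    case 0
    then show ?thesis unfolding gam_def r_def[symmetric] a using r0 pj
      by (simp add: field_simps)
  next
    case (Suc k')
    have g: "gam p q K j k = gam p q K j k' * (r / (1 + r))"
      unfolding gam_def r_def[symmetric] Suc by simp
    show ?thesis unfolding a g using Suc r0 pj
      by (simp add: field_simps)
  qed
qed

lemma Zk_abs:
  assumes P: "params K p q" and j: "j \<in> {1..K}"
  shows "\<bar>Zk p q K j k n s\<bar> \<le> (1 + gam p q K j k) * real (Mc j n s)"
proof -
  have g: "gam p q K j k \<ge> 0" by (rule gam_nonneg[OF P j])
  have "real (Nc k j n s) \<le> real (Mc j n s)" using Nc_le_Mc by simp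
  moreover have "0 \<le> gam p q K j k * real (Mc j n s)" using g by simp
  ultimately show ?thesis unfolding Zk_def by (simp add: algebra_simps abs_le_iff)
qed

lemma Zk_drift:
  assumes P: "params K p q" and j: "j \<in> {1..K}" and pj: "p j > 0" and V: "valid K n s"
  shows "Zk p q K j k n s * (SE p q K n s (\<lambda>i v. Zk p q K j k (Suc n) (newst n s i v)) - Zk p q K j k n s)
     \<le> aa p q K j * (1 + gam p q K j k) * (if k = 0 then 0 else \<bar>Zk p q K j (k - 1) n s\<bar>)"
proof -
  define Z where "Z = Zk p q K j k n s"
  define M where "M = real (Mc j n s)"
  define N where "N = real (Nc k j n s)"
  define Nm where "Nm = (if k = 0 then 0 else real (Nc (k - 1) j n s))"
  define g where "g = gam p q K j k"
  define gm where "gm = (if k = 0 then 0 else gam p q K j (k - 1))"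
  define a where "a = aa p q K j"
  define Zm where "Zm = Nm - gm * M"
  have Mpos: "M > 0" unfolding M_def Mc_def using valid_card[OF V j] by simp
  have a0: "a \<ge> 0" unfolding a_def by (rule aa_nonneg[OF P j])
  have g0: "g \<ge> 0" unfolding g_def by (rule gam_nonneg[OF P j])
  have ZNM: "Z = N - g * M" unfolding Z_def N_def g_def M_def Zk_def by simp
  have s1: "SE p q K n s (\<lambda>i v. Zk p q K j k (Suc n) (newst n s i v))
     = SE p q K n s (\<lambda>i v. Z + (if i = j then (if k = 0 then 1 else 0) - g else 0)
          + (if fst s v = j \<and> out_degree n s v + 1 = k then 1 else 0)
          - (if fst s v = j \<and> out_degree n s v = k then 1 else 0))"
  proof (rule SE_cong)
    fix i v assume i: "i \<in> {1..K}" and v: "v \<in> {1..n}"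
    show "Zk p q K j k (Suc n) (newst n s i v) = Z + (if i = j then (if k = 0 then 1 else 0) - g else 0)
          + (if fst s v = j \<and> out_degree n s v + 1 = k then 1 else 0)
          - (if fst s v = j \<and> out_degree n s v = k then 1 else 0)"
      unfolding Zk_def Z_def g_def Nc_new[OF V v] Mc_new[OF V v]
      by (cases "i = j"; cases "k = 0"; simp add: algebra_simps split del: if_split)
  qed
  have c1: "card {v\<in>Vt j n s. out_degree n s v + 1 = k} = (if k = 0 then 0 else Nc (k - 1) j n s)"
  proof (cases k)
    case 0 then show ?thesis by simp
  next
    case (Suc k') then show ?thesis unfolding Nc_def by simp
  qed
  have s2: "SE p q K n s (\<lambda>i v. Zk p q K j k (Suc n) (newst n s i v))
      = Z + ((if k = 0 then 1 else 0) - g) * p j + a * Nm / M - a * N / M"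
    unfolding s1 SE_add SE_diff SE_const[OF P V] SE_ind_i[OF P V j] SE_ind_v[OF P V j]
    unfolding c1 aa_def[symmetric] a_def[symmetric] Nm_def N_def M_def Mc_def Nc_def
    by (simp add: if_distrib)
  have gi: "((if k = 0 then 1 else 0) - g) * p j = a * (g - gm)"
    unfolding g_def gm_def a_def by (rule gam_identity[OF P j pj])
  have s3: "SE p q K n s (\<lambda>i v. Zk p q K j k (Suc n) (newst n s i v)) - Z = a * (Zm - Z) / M"
    unfolding s2 gi Zm_def ZNM using Mpos by (simp add: field_simps)
  have Zb: "\<bar>Z\<bar> \<le> (1 + g) * M" unfolding Z_def g_def M_def by (rule Zk_abs[OF P j])
  have "Z * (a * (Zm - Z) / M) = a * (Z * Zm - Z * Z) / M" by (simp add: algebra_simps)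
  also have "\<dots> \<le> a * (\<bar>Z\<bar> * \<bar>Zm\<bar>) / M"
  proof -
    have "Z * Zm \<le> \<bar>Z\<bar> * \<bar>Zm\<bar>" by (metis abs_ge_self abs_mult)
    moreover have "0 \<le> Z * Z" by simp
    ultimately have "Z * Zm - Z * Z \<le> \<bar>Z\<bar> * \<bar>Zm\<bar>" by linarith
    then show ?thesis using a0 Mpos by (intro divide_right_mono mult_left_mono) auto
  qed
  also have "\<dots> \<le> a * ((1 + g) * M * \<bar>Zm\<bar>) / M"
    using a0 Mpos Zb by (intro divide_right_mono mult_left_mono mult_right_mono) auto
  also have "\<dots> = a * (1 + g) * \<bar>Zm\<bar>" using Mpos by (simp add: field_simps)
  finally have fin: "Z * (a * (Zm - Z) / M) \<le> a * (1 + g) * \<bar>Zm\<bar>" .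
  have Zmeq: "Zm = (if k = 0 then 0 else Zk p q K j (k - 1) n s)"
    unfolding Zm_def Nm_def gm_def Zk_def M_def by simp
  have abs_eq: "\<bar>Zm\<bar> = (if k = 0 then 0 else \<bar>Zk p q K j (k - 1) n s\<bar>)" using Zmeq by simp
  have "Z * (SE p q K n s (\<lambda>i v. Zk p q K j k (Suc n) (newst n s i v)) - Z) \<le> a * (1 + g) * \<bar>Zm\<bar>"
    unfolding s3 by (rule fin)
  then show ?thesis unfolding abs_eq Z_def a_def g_def .
qed

lemma Zk_bound:
  assumes P: "params K p q" and j: "j \<in> {1..K}"
  shows "\<bar>Zk p q K j k n s\<bar> \<le> (1 + gam p q K j k) * real n"
proof -
  have "\<bar>Zk p q K j k n s\<bar> \<le> (1 + gam p q K j k) * real (Mc j n s)" by (rule Zk_abs[OF P j])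
  also have "\<dots> \<le> (1 + gam p q K j k) * real n"
    using gam_nonneg[OF P j, of k] Vt_card_le[of j n s] unfolding Mc_def
    by (intro mult_left_mono) auto
  finally show ?thesis .
qed

lemma Zk_delta:
  assumes P: "params K p q" and j: "j \<in> {1..K}" and V: "valid K n s" and v: "v \<in> {1..n}"
  shows "\<bar>Zk p q K j k (Suc n) (newst n s i v) - Zk p q K j k n s\<bar> \<le> 3 + gam p q K j k"
proof -
  define g where "g = gam p q K j k"
  have g0: "g \<ge> 0" unfolding g_def by (rule gam_nonneg[OF P j])
  define A where "A = (if i = j \<and> k = 0 then 1 else (0::real))"
  define B1 where "B1 = (if fst s v = j \<and> out_degree n s v + 1 = k then 1 else (0::real))"
  define B2 where "B2 = (if fst s v = j \<and> out_degree n s v = k then 1 else (0::real))"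
  define C where "C = (if i = j then 1 else (0::real))"
  have r: "Zk p q K j k (Suc n) (newst n s i v) - Zk p q K j k n s = A + B1 - B2 - g * C"
    unfolding Zk_def Nc_new[OF V v] Mc_new[OF V v] A_def B1_def B2_def C_def g_def
    by (simp add: algebra_simps)
  have "0 \<le> A" "A \<le> 1" "0 \<le> B1" "B1 \<le> 1" "0 \<le> B2" "B2 \<le> 1" "0 \<le> C" "C \<le> 1"
    unfolding A_def B1_def B2_def C_def by auto
  moreover have "0 \<le> g * C" "g * C \<le> g" using g0 \<open>0 \<le> C\<close> \<open>C \<le> 1\<close>
    by (auto intro: mult_left_le)
  ultimately show ?thesis unfolding r g_def[symmetric] abs_le_iff by linarith
qed

definition hk :: "(nat \<Rightarrow> real) \<Rightarrow> (nat \<Rightarrow> nat \<Rightarrow> real) \<Rightarrow> nat \<Rightarrow> nat \<Rightarrow> nat \<Rightarrow> nat \<Rightarrow> cmrt_state \<Rightarrow> real" where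
  "hk p q K j k n s = aa p q K j * (1 + gam p q K j k) * (if k = 0 then 0 else \<bar>Zk p q K j (k - 1) n s\<bar>)"

lemma Zk_L1_step:
  assumes P: "params K p q" and K: "K \<ge> 1" and j: "j \<in> {1..K}" and pj: "p j > 0"
    and hyp: "(\<lambda>n. measure_pmf.expectation (cmrt p q K n) (hk p q K j k n) / real n) \<longlonglongrightarrow> 0"
  shows "(\<lambda>n. measure_pmf.expectation (cmrt p q K n) (\<lambda>s. \<bar>Zk p q K j k n s\<bar>) / real n) \<longlonglongrightarrow> 0"
proof (rule Z_L1[OF P K, where h="hk p q K j k" and B="3 + gam p q K j k"])
  fix n show "\<exists>C. \<forall>s. \<bar>Zk p q K j k n s\<bar> \<le> C" using Zk_bound[OF P j] by blast
next
  fix n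
  have "\<bar>hk p q K j k n s\<bar> \<le> aa p q K j * (1 + gam p q K j k) * ((1 + gam p q K j (k - 1)) * real n)" for s
  proof -
    have a0: "aa p q K j * (1 + gam p q K j k) \<ge> 0"
      using aa_nonneg[OF P j] gam_nonneg[OF P j, of k] by simp
    define Y where "Y = (if k = 0 then 0 else \<bar>Zk p q K j (k - 1) n s\<bar>)"
    have Yb: "Y \<le> (1 + gam p q K j (k - 1)) * real n"
      unfolding Y_def using Zk_bound[OF P j, of "k - 1" n s] gam_nonneg[OF P j, of "k - 1"] by auto
    have Y0: "Y \<ge> 0" unfolding Y_def by simp
    have "hk p q K j k n s = aa p q K j * (1 + gam p q K j k) * Y" unfolding hk_def Y_def by simp
    then have "\<bar>hk p q K j k n s\<bar> = aa p q K j * (1 + gam p q K j k) * Y"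
      using a0 Y0 by simp
    also have "\<dots> \<le> aa p q K j * (1 + gam p q K j k) * ((1 + gam p q K j (k - 1)) * real n)"
      by (rule mult_left_mono[OF Yb a0])
    finally show ?thesis .
  qed
  then show "\<exists>C. \<forall>s. \<bar>hk p q K j k n s\<bar> \<le> C" by blast
next
  fix n s i v assume "n \<ge> K" "valid K n s" "i \<in> {1..K}" "v \<in> {1..n}"
  then show "\<bar>Zk p q K j k (Suc n) (newst n s i v) - Zk p q K j k n s\<bar> \<le> 3 + gam p q K j k"
    using Zk_delta[OF P j] by blast
next
  fix n s assume "n \<ge> K" "valid K n s"
  then show "Zk p q K j k n s * (SE p q K n s (\<lambda>i v. Zk p q K j k (Suc n) (newst n s i v)) - Zk p q K j k n s)
      \<le> hk p q K j k n s"
    unfolding hk_def using Zk_drift[OF P j pj] by blast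
next
  show "(\<lambda>n. measure_pmf.expectation (cmrt p q K n) (hk p q K j k n) / real n) \<longlonglongrightarrow> 0" by (rule hyp)
qed

lemma Zk_L1:
  assumes P: "params K p q" and K: "K \<ge> 1" and j: "j \<in> {1..K}" and pj: "p j > 0"
  shows "(\<lambda>n. measure_pmf.expectation (cmrt p q K n) (\<lambda>s. \<bar>Zk p q K j k n s\<bar>) / real n) \<longlonglongrightarrow> 0"
proof (induction k)
  case 0
  show ?case
  proof (rule Zk_L1_step[OF P K j pj])
    have "hk p q K j 0 n = (\<lambda>s. 0)" for n by (rule ext) (simp add: hk_def)
    then show "(\<lambda>n. measure_pmf.expectation (cmrt p q K n) (hk p q K j 0 n) / real n) \<longlonglongrightarrow> 0" by simp
  qed
next
  case (Suc k)
  show ?case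
  proof (rule Zk_L1_step[OF P K j pj])
    define c where "c = aa p q K j * (1 + gam p q K j (Suc k))"
    have e: "measure_pmf.expectation (cmrt p q K n) (hk p q K j (Suc k) n)
        = c * measure_pmf.expectation (cmrt p q K n) (\<lambda>s. \<bar>Zk p q K j k n s\<bar>)" for n
      unfolding hk_def c_def by simp
    have "(\<lambda>n. c * (measure_pmf.expectation (cmrt p q K n) (\<lambda>s. \<bar>Zk p q K j k n s\<bar>) / real n)) \<longlonglongrightarrow> c * 0"
      by (intro tendsto_mult tendsto_const Suc.IH)
    then show "(\<lambda>n. measure_pmf.expectation (cmrt p q K n) (hk p q K j (Suc k) n) / real n) \<longlonglongrightarrow> 0"
      unfolding e by simp
  qed
qed

lemma Y_bound:
  assumes P: "params K p q" and j: "j \<in> {1..K}"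
  shows "\<bar>real (Mc j n s) - p j * real n\<bar> \<le> 2 * real n"
proof -
  have pj: "0 \<le> p j" "p j \<le> 1" using params_D(1)[OF P] j p_le_1[OF P j] by auto
  have "real (Mc j n s) \<le> real n" using Vt_card_le[of j n s] unfolding Mc_def by simp
  moreover have "p j * real n \<le> real n" using pj by (simp add: mult_left_le_one_le)
  moreover have "0 \<le> p j * real n" using pj by simp
  ultimately show ?thesis by linarith
qed

lemma Ndeg_sum:
  assumes V: "valid K n s"
  shows "real (N_deg k n s) = (\<Sum>j=1..K. real (Nc k j n s))"
proof -
  have e: "{v\<in>{1..n}. out_degree n s v = k} = (\<Union>j\<in>{1..K}. {v\<in>Vt j n s. out_degree n s v = k})"
    using V unfolding valid_def Vt_def by auto
  have "card (\<Union>j\<in>{1..K}. {v\<in>Vt j n s. out_degree n s v = k}) = (\<Sum>j=1..K. card {v\<in>Vt j n s. out_degree n s v = k})"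
    by (rule card_UN_disjoint) (auto simp: Vt_def)
  then show ?thesis unfolding N_deg_def Nc_def e by simp
qed

definition cj :: "(nat \<Rightarrow> real) \<Rightarrow> (nat \<Rightarrow> nat \<Rightarrow> real) \<Rightarrow> nat \<Rightarrow> nat \<Rightarrow> nat \<Rightarrow> real" where
  "cj p q K k j = (if p j = 0 then 0 else p j * gam p q K j k)"

lemma c_sum: "cmrt_c p q K k = (\<Sum>j=1..K. cj p q K k j)"
  unfolding cmrt_c_def cj_def gam_def by (intro sum.cong refl) auto

definition U :: "(nat \<Rightarrow> real) \<Rightarrow> (nat \<Rightarrow> nat \<Rightarrow> real) \<Rightarrow> nat \<Rightarrow> nat \<Rightarrow> nat \<Rightarrow> nat \<Rightarrow> cmrt_state \<Rightarrow> real" where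
  "U p q K k j n s = (if p j = 0 then \<bar>real (Mc j n s) - p j * real n\<bar>
      else \<bar>Zk p q K j k n s\<bar> + gam p q K j k * \<bar>real (Mc j n s) - p j * real n\<bar>)"

lemma U_ge:
  assumes P: "params K p q" and j: "j \<in> {1..K}"
  shows "\<bar>real (Nc k j n s) - cj p q K k j * real n\<bar> \<le> U p q K k j n s"
proof (cases "p j = 0")
  case True
  then show ?thesis unfolding U_def cj_def using Nc_le_Mc[of k j n s] by simp
next
  case False
  have g0: "gam p q K j k \<ge> 0" by (rule gam_nonneg[OF P j])
  have "real (Nc k j n s) - cj p q K k j * real n
      = Zk p q K j k n s + gam p q K j k * (real (Mc j n s) - p j * real n)"
    unfolding Zk_def cj_def using False by (simp add: algebra_simps)
  also have "\<bar>\<dots>\<bar> \<le> \<bar>Zk p q K j k n s\<bar> + gam p q K j k * \<bar>real (Mc j n s) - p j * real n\<bar>"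
    using g0 by (simp add: abs_triangle_ineq[THEN order_trans] abs_mult)
  finally show ?thesis unfolding U_def using False by simp
qed

lemma U_L1:
  assumes P: "params K p q" and K: "K \<ge> 1" and j: "j \<in> {1..K}"
  shows "(\<lambda>n. measure_pmf.expectation (cmrt p q K n) (U p q K k j n) / real n) \<longlonglongrightarrow> 0"
proof (cases "p j = 0")
  case True
  have "U p q K k j n = (\<lambda>s. \<bar>real (Mc j n s) - p j * real n\<bar>)" for n
    by (rule ext) (simp add: U_def True)
  then show ?thesis using Y_L1[OF P K j] by simp
next
  case False
  then have pj: "p j > 0" using params_D(1)[OF P] j by force
  have iZ: "integrable (measure_pmf (cmrt p q K n)) (\<lambda>s. \<bar>Zk p q K j k n s\<bar>)" for n
    by (rule integrable_bounded_pmf[where B="(1 + gam p q K j k) * real n"]) (use Zk_bound[OF P j] in auto)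
  have iY: "integrable (measure_pmf (cmrt p q K n)) (\<lambda>s. \<bar>real (Mc j n s) - p j * real n\<bar>)" for n
    by (rule integrable_bounded_pmf[where B="2 * real n"]) (use Y_bound[OF P j] in auto)
  have e: "measure_pmf.expectation (cmrt p q K n) (U p q K k j n) / real n
     = measure_pmf.expectation (cmrt p q K n) (\<lambda>s. \<bar>Zk p q K j k n s\<bar>) / real n
       + gam p q K j k * (measure_pmf.expectation (cmrt p q K n) (\<lambda>s. \<bar>real (Mc j n s) - p j * real n\<bar>) / real n)" for n
  proof -
    have "U p q K k j n = (\<lambda>s. \<bar>Zk p q K j k n s\<bar> + gam p q K j k * \<bar>real (Mc j n s) - p j * real n\<bar>)"
      by (rule ext) (simp add: U_def False)
    then have "measure_pmf.expectation (cmrt p q K n) (U p q K k j n)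
       = measure_pmf.expectation (cmrt p q K n) (\<lambda>s. \<bar>Zk p q K j k n s\<bar>)
         + gam p q K j k * measure_pmf.expectation (cmrt p q K n) (\<lambda>s. \<bar>real (Mc j n s) - p j * real n\<bar>)"
      using iZ iY by simp
    then show ?thesis by (simp add: add_divide_distrib)
  qed
  have "(\<lambda>n. measure_pmf.expectation (cmrt p q K n) (\<lambda>s. \<bar>Zk p q K j k n s\<bar>) / real n
       + gam p q K j k * (measure_pmf.expectation (cmrt p q K n) (\<lambda>s. \<bar>real (Mc j n s) - p j * real n\<bar>) / real n))
       \<longlonglongrightarrow> 0 + gam p q K j k * 0"
    by (intro tendsto_add tendsto_mult tendsto_const Zk_L1[OF P K j pj] Y_L1[OF P K j])
  then show ?thesis unfolding e by simp
qed

lemma U_nonneg: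
  assumes P: "params K p q" and j: "j \<in> {1..K}"
  shows "U p q K k j n s \<ge> 0"
  unfolding U_def using gam_nonneg[OF P j, of k] by auto

lemma W_bound:
  assumes P: "params K p q" and V: "valid K n s" and n: "n \<ge> 1"
  shows "\<bar>real (N_deg k n s) / real n - cmrt_c p q K k\<bar> \<le> (\<Sum>j=1..K. U p q K k j n s) / real n"
proof -
  have np: "real n > 0" using n by simp
  have "real (N_deg k n s) / real n - cmrt_c p q K k
      = (\<Sum>j=1..K. real (Nc k j n s) - cj p q K k j * real n) / real n"
  proof -
    have e1: "(\<Sum>j=1..K. real (Nc k j n s) - cj p q K k j * real n)
       = (\<Sum>j=1..K. real (Nc k j n s)) - (\<Sum>j=1..K. cj p q K k j) * real n"
      by (simp add: sum_subtractf sum_distrib_right)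
    show ?thesis unfolding Ndeg_sum[OF V] c_sum e1 using np by (simp add: diff_divide_distrib)
  qed
  then have "\<bar>real (N_deg k n s) / real n - cmrt_c p q K k\<bar>
      = \<bar>\<Sum>j=1..K. real (Nc k j n s) - cj p q K k j * real n\<bar> / real n"
    using np by simp
  also have "\<dots> \<le> (\<Sum>j=1..K. \<bar>real (Nc k j n s) - cj p q K k j * real n\<bar>) / real n"
    using np by (intro divide_right_mono sum_abs) auto
  also have "\<dots> \<le> (\<Sum>j=1..K. U p q K k j n s) / real n"
    using np by (intro divide_right_mono sum_mono U_ge[OF P]) auto
  finally show ?thesis .
qed

theorem theorem3p5:
  fixes K k :: nat and p :: "nat \<Rightarrow> real" and q :: "nat \<Rightarrow> nat \<Rightarrow> real"
  assumes "K \<ge> 2"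
    and "\<forall>i\<in>{1..K}. p i \<ge> 0"
    and "(\<Sum>i=1..K. p i) = 1"
    and "\<forall>i\<in>{1..K}. p i \<le> p 1"
    and "p 1 > 0"
    and "\<forall>i\<in>{1..K}. \<forall>j\<in>{1..K}. q i j \<ge> 0"
    and "\<forall>i\<in>{1..K}. (\<Sum>j=1..K. q i j) = 1"
  shows "\<forall>\<epsilon>>0. ((\<lambda>n. measure_pmf.prob (cmrt p q K n)
            {s. \<bar>real (N_deg k n s) / real n - cmrt_c p q K k\<bar> > \<epsilon>}) \<longlongrightarrow> 0) at_top"
proof (intro allI impI)
  fix \<epsilon> :: real assume eps: "\<epsilon> > 0"
  have P: "params K p q" unfolding params_def using assms(2,3,6,7) by blast
  have K: "K \<ge> 1" using assms(1) by simp
  define Bn where "Bn n = (\<Sum>j=1..K. measure_pmf.expectation (cmrt p q K n) (U p q K k j n) / real n) / \<epsilon>" for n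
  have Blim: "Bn \<longlonglongrightarrow> 0"
  proof -
    have "(\<lambda>n. (\<Sum>j=1..K. measure_pmf.expectation (cmrt p q K n) (U p q K k j n) / real n) / \<epsilon>)
        \<longlonglongrightarrow> (\<Sum>j=1..K. 0) / \<epsilon>"
      by (intro tendsto_divide tendsto_sum tendsto_const U_L1[OF P K]) (use eps in auto)
    then show ?thesis unfolding Bn_def by simp
  qed
  define A where "A n = {s. \<bar>real (N_deg k n s) / real n - cmrt_c p q K k\<bar> > \<epsilon>}" for n
  have le: "measure_pmf.prob (cmrt p q K n) (A n) \<le> Bn n" if n: "n \<ge> max K 1" for n
  proof -
    have nK: "n \<ge> K" and n1: "n \<ge> 1" using n by auto
    have np: "real n > 0" using n1 by simp
    have iU: "integrable (measure_pmf (cmrt p q K n)) (U p q K k j n)" if j: "j \<in> {1..K}" for j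
    proof (rule integrable_bounded_pmf[where B="(1 + gam p q K j k) * real n + gam p q K j k * (2 * real n) + 2 * real n"], intro allI)
      fix s
      have g0: "gam p q K j k \<ge> 0" by (rule gam_nonneg[OF P j])
      have a: "\<bar>Zk p q K j k n s\<bar> \<le> (1 + gam p q K j k) * real n" by (rule Zk_bound[OF P j])
      have b: "\<bar>real (Mc j n s) - p j * real n\<bar> \<le> 2 * real n" by (rule Y_bound[OF P j])
      have c: "gam p q K j k * \<bar>real (Mc j n s) - p j * real n\<bar> \<le> gam p q K j k * (2 * real n)"
        by (rule mult_left_mono[OF b g0])
      have d: "\<bar>real (Mc j n s) - p j * real n\<bar> \<le> (1 + gam p q K j k) * real n + gam p q K j k * (2 * real n) + 2 * real n"
      proof -
        have gn: "0 \<le> gam p q K j k * real n" using g0 np by simp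
        have e: "(1 + gam p q K j k) * real n + gam p q K j k * (2 * real n) = real n + 3 * (gam p q K j k * real n)"
          by (simp add: algebra_simps)
        show ?thesis using b e gn by linarith
      qed
      have u0: "U p q K k j n s \<ge> 0" by (rule U_nonneg[OF P j])
      have "U p q K k j n s \<le> (1 + gam p q K j k) * real n + gam p q K j k * (2 * real n) + 2 * real n"
      proof (cases "p j = 0")
        case True then show ?thesis unfolding U_def using d by simp
      next
        case False then show ?thesis unfolding U_def using add_mono[OF a c] np by simp
      qed
      then show "\<bar>U p q K k j n s\<bar> \<le> (1 + gam p q K j k) * real n + gam p q K j k * (2 * real n) + 2 * real n"
        using u0 by simp
    qed
    have iS: "integrable (measure_pmf (cmrt p q K n)) (\<lambda>s. (\<Sum>j=1..K. U p q K k j n s) / (real n * \<epsilon>))"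
    proof -
      have iS0: "integrable (measure_pmf (cmrt p q K n)) (\<lambda>s. \<Sum>j\<in>{1..K}. U p q K k j n s)"
        by (rule Bochner_Integration.integrable_sum) (rule iU)
      show ?thesis using iS0 by simp
    qed
    have "measure_pmf.prob (cmrt p q K n) (A n) = measure_pmf.expectation (cmrt p q K n) (indicator (A n))"
      by simp
    also have "\<dots> \<le> measure_pmf.expectation (cmrt p q K n) (\<lambda>s. (\<Sum>j=1..K. U p q K k j n s) / (real n * \<epsilon>))"
    proof (rule integral_mono_AE)
      show "integrable (measure_pmf (cmrt p q K n)) (indicator (A n) :: cmrt_state \<Rightarrow> real)"
        by (rule integrable_bounded_pmf[where B=1]) (auto simp: indicator_def)
      show "integrable (measure_pmf (cmrt p q K n)) (\<lambda>s. (\<Sum>j=1..K. U p q K k j n s) / (real n * \<epsilon>))"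
        by (rule iS)
      show "AE s in measure_pmf (cmrt p q K n). indicator (A n) s \<le> (\<Sum>j=1..K. U p q K k j n s) / (real n * \<epsilon>)"
      proof (rule AE_pmfI)
        fix s assume "s \<in> set_pmf (cmrt p q K n)"
        then have V: "valid K n s" by (rule valid_cmrt[OF P K nK])
        have S0: "(\<Sum>j=1..K. U p q K k j n s) \<ge> 0" by (intro sum_nonneg U_nonneg[OF P]) auto
        show "indicator (A n) s \<le> (\<Sum>j=1..K. U p q K k j n s) / (real n * \<epsilon>)"
        proof (cases "s \<in> A n")
          case True
          then have "\<epsilon> < \<bar>real (N_deg k n s) / real n - cmrt_c p q K k\<bar>" unfolding A_def by simp
          also have "\<dots> \<le> (\<Sum>j=1..K. U p q K k j n s) / real n" by (rule W_bound[OF P V n1])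
          finally have "\<epsilon> * real n < (\<Sum>j=1..K. U p q K k j n s)" using np by (simp add: field_simps)
          then have "1 \<le> (\<Sum>j=1..K. U p q K k j n s) / (real n * \<epsilon>)"
            using np eps by (simp add: field_simps)
          then show ?thesis using True by simp
        next
          case False
          then show ?thesis using S0 np eps by simp
        qed
      qed
    qed
    also have "\<dots> = Bn n"
    proof -
      have "measure_pmf.expectation (cmrt p q K n) (\<lambda>s. (\<Sum>j=1..K. U p q K k j n s) / (real n * \<epsilon>))
          = measure_pmf.expectation (cmrt p q K n) (\<lambda>s. (\<Sum>j=1..K. U p q K k j n s)) / (real n * \<epsilon>)"
        by (rule integral_divide_zero)
      also have "measure_pmf.expectation (cmrt p q K n) (\<lambda>s. (\<Sum>j=1..K. U p q K k j n s))
          = (\<Sum>j=1..K. measure_pmf.expectation (cmrt p q K n) (U p q K k j n))"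
        by (rule Bochner_Integration.integral_sum) (use iU in auto)
      finally show ?thesis unfolding Bn_def using np eps
        by (simp add: sum_divide_distrib)
    qed
    finally show ?thesis .
  qed
  show "((\<lambda>n. measure_pmf.prob (cmrt p q K n)
            {s. \<bar>real (N_deg k n s) / real n - cmrt_c p q K k\<bar> > \<epsilon>}) \<longlongrightarrow> 0) at_top"
    unfolding A_def[symmetric]
  proof (rule tendsto_sandwich[OF _ _ tendsto_const Blim])
    show "\<forall>\<^sub>F n in sequentially. 0 \<le> measure_pmf.prob (cmrt p q K n) (A n)" by simp
    show "\<forall>\<^sub>F n in sequentially. measure_pmf.prob (cmrt p q K n) (A n) \<le> Bn n"
      using le by (intro eventually_sequentiallyI)
  qed
qed

end
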